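(* Let $G=(V,E)$ be a finite weakly connected directed graph with $V=\{1,\dots,n\}$, nonnegative adjacency matrix $W$ in which every row has a positive entry, $D=\operatorname{diag}(d_1,\dots,d_n)$ with $d_i=\sum_j W_{ij}$, and $P=D^{-1}W$. Let $A=\operatorname{diag}(\alpha_1,\dots,\alpha_n)$ with $\alpha_i\in[0,1)$ for all $i$, and let $v$ be a probability vector on $V$. Then the Location-of-Restart Personalized PageRank $\rho(v)$ (a row vector) satisfies $$\rho(v)=v^T[I-AP]^{-1}[I-A].$$
   Context: Consider the random walk $(X_t)_{t\ge0}$ on $V$ in which, at each step from the current node $i$, with probability $1-\alpha_i$ a restart occurs at time $t+1$ and $X_{t+1}$ is drawn from $v$, and otherwise $X_{t+1}=j$ with probability $P_{ij}$; its transition matrix is $AP+(I-A)\underline{1}v^T$, with $\underline{1}$ the all-ones column vector. The Location-of-Restart Personalized PageRank is $\rho_j(v)=\lim_{t\to\infty}\mathbb P(X_t=j\mid \text{a restart occurs at time } t+1)$, i.e. the long-run distribution of the node occupied just before a restart. *)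

theory Defs
  imports "HOL-Analysis.Analysis"
begin

text \<open>Vertex set V is a finite type 'n (V = {1..n}); matrices are real^'n^'n.\<close>

definition edges :: "real^'n^'n \<Rightarrow> ('n \<times> 'n) set" where
  "edges W = {(i, j). W $ i $ j \<noteq> 0}"

definition weakly_connected :: "real^'n^'n \<Rightarrow> bool" where
  "weakly_connected W \<longleftrightarrow> (\<forall>i j. (i, j) \<in> (edges W \<union> (edges W)\<inverse>)\<^sup>*)"

definition degree_matrix :: "real^'n^'n \<Rightarrow> real^'n^'n" where
  "degree_matrix W = (\<chi> i j. if i = j then (\<Sum>k\<in>UNIV. W $ i $ k) else 0)"

definition trans_matrix :: "real^'n^'n \<Rightarrow> real^'n^'n" where
  "trans_matrix W = matrix_inv (degree_matrix W) ** W"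

definition diag_mat :: "real^'n \<Rightarrow> real^'n^'n" where
  "diag_mat a = (\<chi> i j. if i = j then a $ i else 0)"

definition prob_vector :: "real^'n \<Rightarrow> bool" where
  "prob_vector v \<longleftrightarrow> (\<forall>i. v $ i \<ge> 0) \<and> (\<Sum>i\<in>UNIV. v $ i) = 1"

definition ones_vT :: "real^'n \<Rightarrow> real^'n^'n" where
  "ones_vT v = (\<chi> i j. v $ j)"

definition restart_walk_matrix :: "real^'n^'n \<Rightarrow> real^'n \<Rightarrow> real^'n \<Rightarrow> real^'n^'n" where
  "restart_walk_matrix W alpha v =
     diag_mat alpha ** trans_matrix W + (mat 1 - diag_mat alpha) ** ones_vT v"

fun walk_dist :: "real^'n^'n \<Rightarrow> real^'n \<Rightarrow> real^'n \<Rightarrow> real^'n \<Rightarrow> nat \<Rightarrow> real^'n" where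
  "walk_dist W alpha v mu0 0 = mu0"
| "walk_dist W alpha v mu0 (Suc t) = walk_dist W alpha v mu0 t v* restart_walk_matrix W alpha v"

text \<open>P(X_t = j and a restart occurs at time t+1) = P(X_t = j) (1 - alpha_j).\<close>
definition restart_joint :: "real^'n^'n \<Rightarrow> real^'n \<Rightarrow> real^'n \<Rightarrow> real^'n \<Rightarrow> nat \<Rightarrow> 'n \<Rightarrow> real" where
  "restart_joint W alpha v mu0 t j = walk_dist W alpha v mu0 t $ j * (1 - alpha $ j)"

definition restart_cond :: "real^'n^'n \<Rightarrow> real^'n \<Rightarrow> real^'n \<Rightarrow> real^'n \<Rightarrow> nat \<Rightarrow> 'n \<Rightarrow> real" where
  "restart_cond W alpha v mu0 t j =
     restart_joint W alpha v mu0 t j / (\<Sum>k\<in>UNIV. restart_joint W alpha v mu0 t k)"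

end

theory Submission
  imports Defs
begin

lemma inv_unique:
  fixes A B :: "real^'n^'n"
  assumes "B ** A = mat 1"
  shows "matrix_inv A = B"
proof -
  have inv: "invertible A" using assms invertible_left_inverse by blast
  have "A ** matrix_inv A = mat 1 \<and> matrix_inv A ** A = mat 1"
    using inv unfolding invertible_def matrix_inv_def by (rule someI_ex)
  hence "B = B ** (A ** matrix_inv A)" by simp
  also have "\<dots> = matrix_inv A" by (simp add: matrix_mul_assoc assms)
  finally show ?thesis by simp
qed

lemma inv_left:
  fixes A :: "real^'n^'n"
  assumes "invertible A"
  shows "matrix_inv A ** A = mat 1"
proof -
  have "A ** matrix_inv A = mat 1 \<and> matrix_inv A ** A = mat 1"
    using assms unfolding invertible_def matrix_inv_def by (rule someI_ex)
  thus ?thesis by simp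
qed

lemma contr:
  fixes e :: "'n::finite \<Rightarrow> real" and Mf :: "'n \<Rightarrow> 'n \<Rightarrow> real" and v :: "'n \<Rightarrow> real"
  assumes e0: "(\<Sum>i\<in>UNIV. e i) = 0" and low: "\<forall>i j. Mf i j \<ge> c * v j"
    and rs: "\<forall>i. (\<Sum>j\<in>UNIV. Mf i j) = 1" and vs: "(\<Sum>j\<in>UNIV. v j) = 1"
  shows "(\<Sum>j\<in>UNIV. \<bar>\<Sum>i\<in>UNIV. e i * Mf i j\<bar>) \<le> (1 - c) * (\<Sum>i\<in>UNIV. \<bar>e i\<bar>)"
proof -
  have eq: "(\<Sum>i\<in>UNIV. e i * Mf i j) = (\<Sum>i\<in>UNIV. e i * (Mf i j - c * v j))" for j
  proof -
    have "(\<Sum>i\<in>UNIV. e i * (Mf i j - c * v j)) = (\<Sum>i\<in>UNIV. e i * Mf i j) - (\<Sum>i\<in>UNIV. e i) * (c * v j)"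
      by (simp add: algebra_simps sum_subtractf sum_distrib_right sum_distrib_left)
    thus ?thesis using e0 by simp
  qed
  have le: "\<bar>\<Sum>i\<in>UNIV. e i * Mf i j\<bar> \<le> (\<Sum>i\<in>UNIV. \<bar>e i\<bar> * (Mf i j - c * v j))" for j
  proof -
    have "\<bar>\<Sum>i\<in>UNIV. e i * (Mf i j - c * v j)\<bar> \<le> (\<Sum>i\<in>UNIV. \<bar>e i * (Mf i j - c * v j)\<bar>)"
      by (rule sum_abs)
    also have "\<dots> = (\<Sum>i\<in>UNIV. \<bar>e i\<bar> * (Mf i j - c * v j))"
      using low by (intro sum.cong) (auto simp: abs_mult)
    finally show ?thesis using eq by simp
  qed
  have "(\<Sum>j\<in>UNIV. \<bar>\<Sum>i\<in>UNIV. e i * Mf i j\<bar>) \<le> (\<Sum>j\<in>UNIV. \<Sum>i\<in>UNIV. \<bar>e i\<bar> * (Mf i j - c * v j))"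
    by (rule sum_mono) (rule le)
  also have "\<dots> = (\<Sum>i\<in>UNIV. \<bar>e i\<bar> * (\<Sum>j\<in>UNIV. (Mf i j - c * v j)))"
    by (subst sum.swap) (simp add: sum_distrib_left)
  also have "\<dots> = (\<Sum>i\<in>UNIV. \<bar>e i\<bar> * (1 - c))"
    using rs vs by (simp add: sum_subtractf sum_distrib_left[symmetric])
  also have "\<dots> = (1 - c) * (\<Sum>i\<in>UNIV. \<bar>e i\<bar>)"
    by (simp add: sum_distrib_left mult.commute)
  finally show ?thesis .
qed

lemma if_diff0: "(if P then a else 0) - (if P then b else 0) = (if P then a - b else (0::real))"
  by simp

theorem theorem3:
  fixes W :: "real^'n^'n" and alpha v :: "real^'n"
  assumes nonneg: "\<forall>i j. W $ i $ j \<ge> 0"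
    and rows: "\<forall>i. \<exists>j. W $ i $ j > 0"
    and conn: "weakly_connected W"
    and alpha: "\<forall>i. 0 \<le> alpha $ i \<and> alpha $ i < 1"
    and v: "prob_vector v"
  shows "\<forall>mu0. prob_vector mu0 \<longrightarrow>
           (\<forall>j. (\<lambda>t. restart_cond W alpha v mu0 t j) \<longlonglongrightarrow>
              (v v* (matrix_inv (mat 1 - diag_mat alpha ** trans_matrix W)
                      ** (mat 1 - diag_mat alpha))) $ j)"
proof -
  define d where "d i = (\<Sum>k\<in>UNIV. W $ i $ k)" for i
  have dpos: "d i > 0" for i
  proof -
    obtain j where "W $ i $ j > 0" using rows by blast
    moreover have "W $ i $ j \<le> d i" unfolding d_def
      by (rule member_le_sum) (use nonneg in auto)
    ultimately show ?thesis by simp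
  qed
  define E :: "real^'n^'n" where "E = (\<chi> i j. if i = j then 1 / d i else 0)"
  have dnz: "d i \<noteq> 0" for i using dpos[of i] by simp
  have "E ** degree_matrix W = mat 1"
    using dnz
    by (simp add: E_def degree_matrix_def matrix_matrix_mult_def mat_def vec_eq_iff
        d_def[symmetric] if_distrib[of "\<lambda>x. x * _"] cong: if_cong)
  hence Dinv: "matrix_inv (degree_matrix W) = E" by (rule inv_unique)
  have Pij: "trans_matrix W $ i $ j = W $ i $ j / d i" for i j
    by (simp add: trans_matrix_def Dinv E_def matrix_matrix_mult_def if_distrib[of "\<lambda>x. x * _"] cong: if_cong)
  have Pnn: "W $ i $ j / d i \<ge> 0" for i j using nonneg dpos[of i] by simp
  have Prs: "(\<Sum>j\<in>UNIV. W $ i $ j / d i) = 1" for i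
    using dpos[of i] by (simp add: sum_divide_distrib[symmetric] d_def[symmetric])
  define M where "M = restart_walk_matrix W alpha v"
  have Mij: "M $ i $ j = alpha $ i * (W $ i $ j / d i) + (1 - alpha $ i) * v $ j" for i j
    by (simp add: M_def restart_walk_matrix_def matrix_matrix_mult_def diag_mat_def mat_def
        ones_vT_def Pij if_diff0 if_distrib[of "\<lambda>x. x * _"] if_distrib[of "\<lambda>x. x / _"] cong: if_cong)
  have vnn: "v $ j \<ge> 0" for j using v by (simp add: prob_vector_def)
  have vs: "(\<Sum>j\<in>UNIV. v $ j) = 1" using v by (simp add: prob_vector_def)
  have Mrs: "(\<Sum>j\<in>UNIV. M $ i $ j) = 1" for i
    unfolding Mij sum.distrib sum_distrib_left[symmetric] Prs vs by simp
  define c where "c = Min ((\<lambda>i. 1 - alpha $ i) ` UNIV)"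
  have cpos: "c > 0" unfolding c_def using alpha by (simp add: Min_gr_iff)
  have cle: "c \<le> 1 - alpha $ i" for i unfolding c_def by (rule Min_le) auto
  have c1: "c \<le> 1" using cle[of undefined] alpha by smt
  have Mlow: "\<forall>i j. M $ i $ j \<ge> c * v $ j"
  proof (intro allI)
    fix i j
    have "c * v $ j \<le> (1 - alpha $ i) * v $ j" using cle[of i] vnn[of j] by (rule mult_right_mono)
    also have "\<dots> \<le> M $ i $ j" unfolding Mij using alpha Pnn[of i j]
      by (metis le_add_same_cancel2 mult_nonneg_nonneg)
    finally show "M $ i $ j \<ge> c * v $ j" .
  qed
  define L1 :: "real^'n \<Rightarrow> real" where "L1 x = (\<Sum>j\<in>UNIV. \<bar>x $ j\<bar>)" for x
  have contrM: "L1 (x v* M) \<le> (1 - c) * L1 x" if "(\<Sum>i\<in>UNIV. x $ i) = 0" for x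
    using contr[where e="\<lambda>i. x $ i" and Mf="\<lambda>i j. M $ i $ j" and c=c and v="\<lambda>j. v $ j"] that Mlow Mrs vs
    by (simp add: L1_def vector_matrix_mult_def)
  have sumM: "(\<Sum>j\<in>UNIV. (x v* M) $ j) = (\<Sum>i\<in>UNIV. x $ i)" for x
    by (simp add: vector_matrix_mult_def sum.swap[of _ UNIV] sum_distrib_left[symmetric] Mrs)
  define B where "B = mat 1 - diag_mat alpha ** trans_matrix W"
  have Bij: "B $ i $ j = (if i = j then 1 else 0) - alpha $ i * (W $ i $ j / d i)" for i j
    by (simp add: B_def matrix_matrix_mult_def diag_mat_def mat_def Pij
        if_distrib[of "\<lambda>x. x * _"] if_distrib[of "\<lambda>x. x / _"] cong: if_cong)
  have ker: "\<forall>y. B *v y = 0 \<longrightarrow> y = 0"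
  proof (intro allI impI)
    fix y assume y0: "B *v y = 0"
    obtain i where imax: "\<forall>j. \<bar>y $ j\<bar> \<le> \<bar>y $ i\<bar>"
    proof -
      have "finite ((\<lambda>j. \<bar>y $ j\<bar>) ` UNIV)" by simp
      moreover have "(\<lambda>j. \<bar>y $ j\<bar>) ` UNIV \<noteq> {}" by simp
      ultimately have "Max ((\<lambda>j. \<bar>y $ j\<bar>) ` UNIV) \<in> (\<lambda>j. \<bar>y $ j\<bar>) ` UNIV"
        by (rule Max_in)
      then obtain i where "\<bar>y $ i\<bar> = Max ((\<lambda>j. \<bar>y $ j\<bar>) ` UNIV)"
        by (metis imageE)
      moreover have "\<forall>j. \<bar>y $ j\<bar> \<le> Max ((\<lambda>j. \<bar>y $ j\<bar>) ` UNIV)" by simp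
      ultimately show ?thesis using that by metis
    qed
    have "(B *v y) $ i = y $ i - alpha $ i * (\<Sum>j\<in>UNIV. (W $ i $ j / d i) * y $ j)"
      by (simp add: matrix_vector_mult_def Bij left_diff_distrib sum_subtractf
          sum_distrib_left mult.assoc if_distrib[of "\<lambda>x. x * _"] cong: if_cong)
    hence yi: "y $ i = alpha $ i * (\<Sum>j\<in>UNIV. (W $ i $ j / d i) * y $ j)" using y0 by simp
    have "\<bar>\<Sum>j\<in>UNIV. (W $ i $ j / d i) * y $ j\<bar> \<le> (\<Sum>j\<in>UNIV. \<bar>(W $ i $ j / d i) * y $ j\<bar>)"
      by (rule sum_abs)
    also have "\<dots> \<le> (\<Sum>j\<in>UNIV. (W $ i $ j / d i) * \<bar>y $ i\<bar>)"
      by (rule sum_mono) (metis Pnn imax abs_mult abs_of_nonneg mult_left_mono)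
    also have "\<dots> = \<bar>y $ i\<bar>" unfolding sum_distrib_right[symmetric] Prs by simp
    finally have Sle: "\<bar>\<Sum>j\<in>UNIV. W $ i $ j / d i * y $ j\<bar> \<le> \<bar>y $ i\<bar>" .
    have a0: "0 \<le> alpha $ i" and a1: "alpha $ i < 1" using alpha by auto
    have "\<bar>y $ i\<bar> = alpha $ i * \<bar>\<Sum>j\<in>UNIV. W $ i $ j / d i * y $ j\<bar>"
      using yi a0 by (metis abs_mult abs_of_nonneg)
    also have "\<dots> \<le> alpha $ i * \<bar>y $ i\<bar>" using Sle a0 by (rule mult_left_mono)
    finally have "(1 - alpha $ i) * \<bar>y $ i\<bar> \<le> 0" by (simp add: algebra_simps)
    hence "\<bar>y $ i\<bar> \<le> 0" using a1 by (simp add: mult_le_0_iff)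
    hence "\<bar>y $ i\<bar> = 0" by simp
    hence "\<forall>j. y $ j = 0" using imax by (metis abs_le_zero_iff)
    thus "y = 0" by (simp add: vec_eq_iff)
  qed
  have invB: "invertible B"
    using ker matrix_left_invertible_ker invertible_left_inverse by blast
  define pi where "pi = v v* matrix_inv B"
  have piB: "pi v* B = v"
    by (simp add: pi_def vector_matrix_mul_assoc inv_left[OF invB])
  have pieq: "pi $ j - (\<Sum>i\<in>UNIV. pi $ i * alpha $ i * (W $ i $ j / d i)) = v $ j" for j
  proof -
    have "(pi v* B) $ j = pi $ j - (\<Sum>i\<in>UNIV. pi $ i * alpha $ i * (W $ i $ j / d i))"
      by (simp add: vector_matrix_mult_def Bij right_diff_distrib sum_subtractf mult.assoc
          if_distrib[of "\<lambda>x. _ * x"] cong: if_cong)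
    thus ?thesis using piB by simp
  qed
  have S1: "(\<Sum>i\<in>UNIV. pi $ i * (1 - alpha $ i)) = 1"
  proof -
    have "(\<Sum>j\<in>UNIV. \<Sum>i\<in>UNIV. pi $ i * alpha $ i * (W $ i $ j / d i))
          = (\<Sum>i\<in>UNIV. pi $ i * alpha $ i * (\<Sum>j\<in>UNIV. W $ i $ j / d i))"
      by (subst sum.swap) (simp add: sum_distrib_left)
    also have "\<dots> = (\<Sum>i\<in>UNIV. pi $ i * alpha $ i)" by (simp add: Prs)
    finally have sw: "(\<Sum>j\<in>UNIV. \<Sum>i\<in>UNIV. pi $ i * alpha $ i * (W $ i $ j / d i))
          = (\<Sum>i\<in>UNIV. pi $ i * alpha $ i)" .
    have "(\<Sum>j\<in>UNIV. pi $ j - (\<Sum>i\<in>UNIV. pi $ i * alpha $ i * (W $ i $ j / d i))) = 1"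
      using pieq vs by simp
    hence "(\<Sum>j\<in>UNIV. pi $ j) - (\<Sum>i\<in>UNIV. pi $ i * alpha $ i) = 1"
      using sw by (simp add: sum_subtractf)
    thus ?thesis by (simp add: right_diff_distrib sum_subtractf)
  qed
  have piM: "pi v* M = pi"
  proof -
    have "(pi v* M) $ j = pi $ j" for j
    proof -
      have "(pi v* M) $ j = (\<Sum>i\<in>UNIV. pi $ i * alpha $ i * (W $ i $ j / d i))
              + (\<Sum>i\<in>UNIV. pi $ i * (1 - alpha $ i)) * v $ j"
        by (simp add: vector_matrix_mult_def Mij distrib_left sum.distrib sum_distrib_right mult.assoc)
      thus ?thesis using S1 pieq[of j] by simp
    qed
    thus ?thesis by (simp add: vec_eq_iff)
  qed
  define \<sigma> where "\<sigma> = (\<Sum>i\<in>UNIV. pi $ i)"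
  have sig: "\<sigma> \<noteq> 0"
  proof
    assume s0: "\<sigma> = 0"
    have "L1 pi \<le> (1 - c) * L1 pi" using contrM[of pi] s0 piM by (simp add: \<sigma>_def)
    moreover have "L1 pi \<ge> 0" by (simp add: L1_def sum_nonneg)
    ultimately have "c * L1 pi \<le> 0" by (simp add: algebra_simps)
    hence "L1 pi \<le> 0" using cpos by (simp add: mult_le_0_iff)
    hence "L1 pi = 0" using \<open>L1 pi \<ge> 0\<close> by simp
    hence "\<forall>i. pi $ i = 0" unfolding L1_def by (subst (asm) sum_nonneg_eq_0_iff) auto
    thus False using S1 by simp
  qed
  define q :: "real^'n" where "q = (\<chi> j. pi $ j / \<sigma>)"
  have qM: "q v* M = q"
  proof -
    have "(q v* M) $ j = q $ j" for j
    proof -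
      have "(q v* M) $ j = (pi v* M) $ j / \<sigma>"
        by (simp add: q_def vector_matrix_mult_def sum_divide_distrib)
      thus ?thesis using piM by (simp add: q_def)
    qed
    thus ?thesis by (simp add: vec_eq_iff)
  qed
  have qs: "(\<Sum>i\<in>UNIV. q $ i) = 1"
    using sig by (simp add: q_def sum_divide_distrib[symmetric] \<sigma>_def[symmetric])
  have qden: "(\<Sum>k\<in>UNIV. q $ k * (1 - alpha $ k)) = 1 / \<sigma>"
    using S1 by (simp add: q_def sum_divide_distrib[symmetric])
  have target: "(v v* (matrix_inv (mat 1 - diag_mat alpha ** trans_matrix W) ** (mat 1 - diag_mat alpha))) $ j
        = pi $ j * (1 - alpha $ j)" for j
  proof -
    have "v v* (matrix_inv B ** (mat 1 - diag_mat alpha)) = pi v* (mat 1 - diag_mat alpha)"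
      by (simp add: pi_def vector_matrix_mul_assoc)
    moreover have "(pi v* (mat 1 - diag_mat alpha)) $ j = pi $ j * (1 - alpha $ j)"
      by (simp add: vector_matrix_mult_def diag_mat_def mat_def if_diff0
        if_distrib[of "\<lambda>x. _ * x"] cong: if_cong)
    ultimately show ?thesis by (simp add: B_def)
  qed
  show ?thesis
  proof (intro allI impI)
    fix mu0 :: "real^'n" and j assume mu0: "prob_vector mu0"
    define w where "w t = walk_dist W alpha v mu0 t" for t
    have wS: "w (Suc t) = w t v* M" for t by (simp add: w_def M_def)
    have ws: "(\<Sum>i\<in>UNIV. w t $ i) = 1" for t
      by (induction t) (use mu0 in \<open>simp_all add: w_def prob_vector_def sumM[unfolded M_def]\<close>)
    have eb: "L1 (w t - q) \<le> (1 - c) ^ t * L1 (w 0 - q)" for t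
    proof (induction t)
      case 0 thus ?case by simp
    next
      case (Suc t)
      have "w (Suc t) - q = (w t - q) v* M" by (simp add: wS qM vector_matrix_mult_diff_distrib)
      hence "L1 (w (Suc t) - q) \<le> (1 - c) * L1 (w t - q)"
        using contrM[of "w t - q"] ws qs by (simp add: sum_subtractf)
      also have "\<dots> \<le> (1 - c) * ((1 - c) ^ t * L1 (w 0 - q))"
        using Suc c1 by (intro mult_left_mono) auto
      finally show ?case by simp
    qed
    have lim0: "(\<lambda>t. (1 - c) ^ t * L1 (w 0 - q)) \<longlonglongrightarrow> 0"
      using cpos c1 by (intro tendsto_mult_left_zero LIMSEQ_power_zero) auto
    have wk: "(\<lambda>t. w t $ k) \<longlonglongrightarrow> q $ k" for k
    proof -
      have "(\<lambda>t. w t $ k - q $ k) \<longlonglongrightarrow> 0"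
      proof (rule Lim_null_comparison[OF _ lim0])
        show "\<forall>\<^sub>F t in sequentially. norm (w t $ k - q $ k) \<le> (1 - c) ^ t * L1 (w 0 - q)"
        proof (intro always_eventually allI)
          fix t
          have "\<bar>(w t - q) $ k\<bar> \<le> L1 (w t - q)" unfolding L1_def
            by (rule member_le_sum) auto
          thus "norm (w t $ k - q $ k) \<le> (1 - c) ^ t * L1 (w 0 - q)" using eb[of t] by simp
        qed
      qed
      thus ?thesis using Lim_null by blast
    qed
    have num: "(\<lambda>t. restart_joint W alpha v mu0 t j) \<longlonglongrightarrow> q $ j * (1 - alpha $ j)"
      unfolding restart_joint_def w_def[symmetric] by (intro tendsto_mult wk tendsto_const)
    have den: "(\<lambda>t. \<Sum>k\<in>UNIV. restart_joint W alpha v mu0 t k) \<longlonglongrightarrow> 1 / \<sigma>"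
      unfolding restart_joint_def w_def[symmetric] qden[symmetric]
      by (intro tendsto_sum tendsto_mult wk tendsto_const)
    have "(\<lambda>t. restart_cond W alpha v mu0 t j) \<longlonglongrightarrow> (q $ j * (1 - alpha $ j)) / (1 / \<sigma>)"
      unfolding restart_cond_def using sig by (intro tendsto_divide num den) simp
    moreover have "(q $ j * (1 - alpha $ j)) / (1 / \<sigma>) = pi $ j * (1 - alpha $ j)"
      using sig by (simp add: q_def)
    ultimately show "(\<lambda>t. restart_cond W alpha v mu0 t j) \<longlonglongrightarrow>
              (v v* (matrix_inv (mat 1 - diag_mat alpha ** trans_matrix W)
                      ** (mat 1 - diag_mat alpha))) $ j"
      unfolding target by metis
  qed
qed

end
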